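(* Let $q$ be a query with sensitivity $\Delta q$, let $k,\theta>0$, and let the random scale $b$ be such that $1/b$ is Gamma distributed with shape $k$ and scale $\theta$ (density $\frac{x^{k-1}e^{-x/\theta}}{\Gamma(k)\theta^k}$ for $x>0$). Then the R$^2$DP Laplace mechanism $\mathcal M_q(d,b)=q(d)+\mathrm{Lap}(b)$ satisfies $\big((k+1)\ln(1+\Delta q\,\theta)\big)$-differential privacy.
   Context: $\mathrm{Lap}(b)$ is the zero-mean Laplace distribution with density $\frac{1}{2b}e^{-|x|/b}$; the R$^2$DP Laplace mechanism draws the random scale $b$ (independently of the data) and then adds $\mathrm{Lap}(b)$ noise to $q(d)$. $\Delta q=\max|q(d)-q(d')|$ over datasets $d,d'$ differing in one individual's data. A mechanism is $\epsilon$-differentially private if $\mathbb P(\mathcal M(d)\in S)\le e^\epsilon\mathbb P(\mathcal M(d')\in S)$ for all such $d,d'$ and measurable $S$. *)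

theory Defs
  imports "HOL-Probability.Probability"
begin

definition gamma_density :: "real \<Rightarrow> real \<Rightarrow> real \<Rightarrow> real" where
  "gamma_density k \<theta> x =
     (if x > 0 then x powr (k - 1) * exp (- x / \<theta>) / (Gamma k * \<theta> powr k) else 0)"

text \<open>Zero-mean Laplace distribution Lap(b) with density exp(-|x|/b)/(2b), for b > 0.
  For b not positive (a null event in the theorem below) we use the point mass at 0,
  only to keep the kernel a probability measure everywhere.\<close>
definition laplace_measure :: "real \<Rightarrow> real measure" where
  "laplace_measure b =
     (if b > 0 then density lborel (\<lambda>x. ennreal (exp (- \<bar>x\<bar> / b) / (2 * b)))
      else return borel 0)"

definition r2dp_laplace :: "real measure \<Rightarrow> ('d \<Rightarrow> real) \<Rightarrow> 'd \<Rightarrow> real measure" where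
  "r2dp_laplace B q d = B \<bind> (\<lambda>b. distr (laplace_measure b) borel (\<lambda>z. q d + z))"

definition differentially_private ::
    "('d \<Rightarrow> 'd \<Rightarrow> bool) \<Rightarrow> ('d \<Rightarrow> real measure) \<Rightarrow> real \<Rightarrow> bool" where
  "differentially_private adj M \<epsilon> \<longleftrightarrow>
     (\<forall>d d' S. adj d d' \<longrightarrow> S \<in> sets borel \<longrightarrow>
        measure (M d) S \<le> exp \<epsilon> * measure (M d') S)"

end

theory Submission
  imports Defs
begin

lemma nn_exp_abs: "(\<integral>\<^sup>+ x. ennreal (exp (- \<bar>x\<bar>)) \<partial>lborel) = 2"
proof -
  let ?e = "erlang_density 0 (1::real)"
  have m: "?e \<in> borel_measurable borel" by simp
  have e1: "(\<integral>\<^sup>+ x. ennreal (?e x) \<partial>lborel) = 1"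
    using nn_integral_erlang_ith_moment[of 1 0 0] by simp
  have e2: "(\<integral>\<^sup>+ x. ennreal (?e (-x)) \<partial>lborel) = 1"
    using nn_integral_real_affine[of "\<lambda>x. ennreal (?e x)" "-1" 0] e1 by simp
  have "(\<integral>\<^sup>+ x. ennreal (exp (- \<bar>x\<bar>)) \<partial>lborel) = (\<integral>\<^sup>+ x. ennreal (?e x) + ennreal (?e (-x)) \<partial>lborel)"
    by (intro nn_integral_cong_AE, rule AE_mp[OF AE_lborel_singleton[of 0]])
       (auto simp: erlang_density_def ennreal_plus[symmetric] simp del: ennreal_plus)
  also have "\<dots> = 2"
    by (subst nn_integral_add) (auto simp: e1 e2 one_add_one)
  finally show ?thesis .
qed

lemma nn_laplace: assumes b: "b > 0"
  shows "(\<integral>\<^sup>+ x. ennreal (exp (- \<bar>x\<bar> / b) / (2 * b)) \<partial>lborel) = 1"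
proof -
  have "(\<integral>\<^sup>+ x. ennreal (exp (- \<bar>x\<bar> / b) / (2 * b)) \<partial>lborel)
     = b * (\<integral>\<^sup>+ x. ennreal (exp (- \<bar>b * x\<bar> / b) / (2 * b)) \<partial>lborel)"
    using nn_integral_real_affine[of "\<lambda>x. ennreal (exp (- \<bar>x\<bar> / b) / (2 * b))" b 0] b by simp
  also have "\<dots> = b * (\<integral>\<^sup>+ x. ennreal (1 / (2*b)) * ennreal (exp (- \<bar>x\<bar>)) \<partial>lborel)"
    using b by (intro arg_cong2[where f="(*)"] refl nn_integral_cong)
      (simp add: abs_mult ennreal_mult[symmetric])
  also have "\<dots> = ennreal b * (ennreal (1 / (2*b)) * ennreal 2)"
    using b by (subst nn_integral_cmult) (auto simp: nn_exp_abs)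
  also have "\<dots> = ennreal (b * (1 / (2*b) * 2))"
    using b by (simp add: ennreal_mult[symmetric] del: ennreal_numeral)
  also have "\<dots> = 1" using b by simp
  finally show ?thesis .
qed

lemma laplace_prob: "prob_space (laplace_measure b)"
proof (cases "b > 0")
  case True
  show ?thesis unfolding laplace_measure_def using True
    using nn_laplace[OF True] by (intro prob_spaceI) (simp add: emeasure_density)
next
  case False
  then show ?thesis unfolding laplace_measure_def by (simp add: prob_space_return)
qed

lemma sets_laplace[simp]: "sets (laplace_measure b) = sets borel"
  unfolding laplace_measure_def by auto

lemma emeasure_kernel_pos:
  assumes b: "b > 0" and A: "A \<in> sets borel"
  shows "emeasure (distr (laplace_measure b) borel (\<lambda>z. c + z)) A
    = (\<integral>\<^sup>+ y. ennreal (exp (- \<bar>y - c\<bar> / b) / (2 * b)) * indicator A y \<partial>lborel)"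
proof -
  have "emeasure (distr (laplace_measure b) borel (\<lambda>z. c + z)) A
     = (\<integral>\<^sup>+ x. ennreal (exp (- \<bar>x\<bar> / b) / (2 * b)) * indicator A (c + x) \<partial>lborel)"
  proof -
    have P: "(+) c -` A \<in> sets borel" using measurable_sets[OF _ A, of "(+) c" borel] by simp
    show ?thesis using b A P unfolding laplace_measure_def
      by (simp add: emeasure_distr emeasure_density indicator_def)
  qed
  also have "\<dots> = (\<integral>\<^sup>+ y. ennreal (exp (- \<bar>y - c\<bar> / b) / (2 * b)) * indicator A y \<partial>lborel)"
    using nn_integral_real_affine[of "\<lambda>y. ennreal (exp (- \<bar>y - c\<bar> / b) / (2 * b)) * indicator A y" 1 c] A
    by simp
  finally show ?thesis .
qed

lemma emeasure_kernel:
  assumes A: "A \<in> sets borel"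
  shows "emeasure (distr (laplace_measure b) borel (\<lambda>z. c + z)) A
    = (if b > 0 then (\<integral>\<^sup>+ y. ennreal (exp (- \<bar>y - c\<bar> / b) / (2 * b)) * indicator A y \<partial>lborel)
       else indicator A c)"
proof (cases "b > 0")
  case True then show ?thesis using emeasure_kernel_pos[OF True A] by simp
next
  case False
  have P: "(+) c -` A \<in> sets borel" using measurable_sets[OF _ A, of "(+) c" borel] by simp
  show ?thesis using A P False unfolding laplace_measure_def
    by (simp add: emeasure_distr indicator_def)
qed

lemma kernel_meas:
  "(\<lambda>b. distr (laplace_measure b) borel (\<lambda>z. c + z)) \<in> measurable borel (subprob_algebra borel)"
proof (rule measurable_subprob_algebra)
  fix b :: real
  show "subprob_space (distr (laplace_measure b) borel (\<lambda>z. c + z))"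
    using laplace_prob[of b] by (intro prob_space_imp_subprob_space prob_space.prob_space_distr) (auto simp: measurable_cong_sets[OF sets_laplace refl])
  show "sets (distr (laplace_measure b) borel (\<lambda>z. c + z)) = sets borel" by simp
next
  fix A :: "real set" assume A[measurable]: "A \<in> sets borel"
  show "(\<lambda>b. emeasure (distr (laplace_measure b) borel (\<lambda>z. c + z)) A) \<in> borel_measurable borel"
    unfolding emeasure_kernel[OF A] by measurable
qed

lemma Gamma_pos': "k > 0 \<Longrightarrow> Gamma (k::real) > 0"
  by (simp add: Gamma_real_pos)

lemma gamma_total:
  assumes k: "k > 0" and th: "\<theta> > 0"
  shows "(\<integral>\<^sup>+ x. ennreal (gamma_density k \<theta> x) \<partial>lborel) = 1"
proof -
  have G: "Gamma k > 0" using k by (rule Gamma_pos')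
  have m[measurable]: "gamma_density k \<theta> \<in> borel_measurable borel"
    unfolding gamma_density_def by measurable
  have "(\<integral>\<^sup>+ x. ennreal (gamma_density k \<theta> x) \<partial>lborel)
     = \<theta> * (\<integral>\<^sup>+ x. ennreal (gamma_density k \<theta> (\<theta> * x)) \<partial>lborel)"
    using nn_integral_real_affine[of "\<lambda>x. ennreal (gamma_density k \<theta> x)" \<theta> 0] th by simp
  also have "\<dots> = (\<integral>\<^sup>+ x. ennreal \<theta> * ennreal (gamma_density k \<theta> (\<theta> * x)) \<partial>lborel)"
    by (subst nn_integral_cmult) auto
  also have "\<dots> = (\<integral>\<^sup>+ x. ennreal (1 / Gamma k) * ennreal (indicator {0..} x * x powr (k - 1) / exp x) \<partial>lborel)"
  proof (intro nn_integral_cong)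
    fix x :: real
    have "\<theta> * gamma_density k \<theta> (\<theta> * x) = 1 / Gamma k * (indicator {0..} x * x powr (k - 1) / exp x)"
    proof (cases "x > 0")
      case True
      have e: "\<theta> * \<theta> powr (k - 1) = \<theta> powr k"
        using th by (simp add: powr_diff)
      have "\<theta> * gamma_density k \<theta> (\<theta> * x) = (\<theta> * \<theta> powr (k - 1)) * x powr (k - 1) * exp (- x) / (Gamma k * \<theta> powr k)"
        using True th by (simp add: gamma_density_def powr_mult)
      also have "\<dots> = 1 / Gamma k * (indicator {0..} x * x powr (k - 1) / exp x)"
        using True th G unfolding e by (simp add: exp_minus field_simps)
      finally show ?thesis .
    next
      case False then show ?thesis using th by (auto simp: gamma_density_def zero_less_mult_iff indicator_def)
    qed
    then show "ennreal \<theta> * ennreal (gamma_density k \<theta> (\<theta> * x)) = ennreal (1 / Gamma k) * ennreal (indicator {0..} x * x powr (k - 1) / exp x)"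
      using th G by (simp add: ennreal_mult[symmetric] gamma_density_def)
  qed
  also have "\<dots> = ennreal (1 / Gamma k) * ennreal (Gamma k)"
    using Gamma_conv_nn_integral_real[OF k] by (subst nn_integral_cmult) auto
  also have "\<dots> = 1" using G by (simp add: ennreal_mult[symmetric])
  finally show ?thesis .
qed

definition Jc :: "real \<Rightarrow> real \<Rightarrow> ennreal" where
  "Jc k \<theta> = (\<integral>\<^sup>+ s. ennreal (if s > 0 then s powr k * exp (- s) / (2 * Gamma k * \<theta> powr k) else 0) \<partial>lborel)"

lemma gamma_moment:
  assumes k: "k > 0" and th: "\<theta> > 0" and a: "a \<ge> 0"
  shows "(\<integral>\<^sup>+ t. ennreal (gamma_density k \<theta> t * (t / 2 * exp (- a * t))) \<partial>lborel)
     = ennreal ((1 / \<theta> + a) powr - (k + 1)) * Jc k \<theta>"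
proof -
  define L where "L = 1 / \<theta> + a"
  have L: "L > 0" using th a unfolding L_def by (simp add: add_pos_nonneg)
  have G: "Gamma k > 0" using k by (rule Gamma_pos')
  have m[measurable]: "gamma_density k \<theta> \<in> borel_measurable borel"
    unfolding gamma_density_def by measurable
  have "(\<integral>\<^sup>+ t. ennreal (gamma_density k \<theta> t * (t / 2 * exp (- a * t))) \<partial>lborel)
     = (1 / L) * (\<integral>\<^sup>+ s. ennreal (gamma_density k \<theta> (s / L) * ((s / L) / 2 * exp (- a * (s / L)))) \<partial>lborel)"
    using nn_integral_real_affine[of "\<lambda>t. ennreal (gamma_density k \<theta> t * (t / 2 * exp (- a * t)))" "1 / L" 0] L
    by simp
  also have "\<dots> = (1 / L) * (\<integral>\<^sup>+ s. ennreal (L powr - k) * ennreal (if s > 0 then s powr k * exp (- s) / (2 * Gamma k * \<theta> powr k) else 0) \<partial>lborel)"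
  proof (intro arg_cong2[where f="(*)"] refl nn_integral_cong)
    fix s :: real
    have "gamma_density k \<theta> (s / L) * ((s / L) / 2 * exp (- a * (s / L)))
        = L powr - k * (if s > 0 then s powr k * exp (- s) / (2 * Gamma k * \<theta> powr k) else 0)"
    proof (cases "s > 0")
      case True
      have e1: "(s / L) powr (k - 1) * (s / L) = s powr k / L powr k"
        using True L by (simp add: powr_diff powr_divide)
      have e2: "exp (- (s / L) / \<theta>) * exp (- a * (s / L)) = exp (- s)"
      proof -
        have "- (s / L) / \<theta> + - a * (s / L) = - (s / L) * (1 / \<theta> + a)"
          by (simp add: algebra_simps)
        also have "\<dots> = - (s / L) * L" unfolding L_def ..
        also have "\<dots> = - s" using L by simp
        finally have "- (s / L) / \<theta> + - a * (s / L) = - s" .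
        then show ?thesis by (simp add: exp_add[symmetric])
      qed
      have "gamma_density k \<theta> (s / L) * ((s / L) / 2 * exp (- a * (s / L)))
          = ((s / L) powr (k - 1) * (s / L)) * (exp (- (s / L) / \<theta>) * exp (- a * (s / L))) / (2 * Gamma k * \<theta> powr k)"
        using True L by (simp add: gamma_density_def field_simps)
      also have "\<dots> = L powr - k * (s powr k * exp (- s) / (2 * Gamma k * \<theta> powr k))"
        unfolding e1 e2 using L by (simp add: powr_minus field_simps)
      finally show ?thesis using True by simp
    next
      case False
      then have "\<not> s / L > 0" using L by (simp add: zero_less_divide_iff)
      then show ?thesis using False by (simp add: gamma_density_def)
    qed
    then show "ennreal (gamma_density k \<theta> (s / L) * ((s / L) / 2 * exp (- a * (s / L))))
      = ennreal (L powr - k) * ennreal (if s > 0 then s powr k * exp (- s) / (2 * Gamma k * \<theta> powr k) else 0)"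
      using G th by (simp add: ennreal_mult[symmetric])
  qed
  also have "\<dots> = ennreal (1 / L) * (ennreal (L powr - k) * Jc k \<theta>)"
    unfolding Jc_def using L by (subst nn_integral_cmult) auto
  also have "\<dots> = ennreal (1 / L * L powr - k) * Jc k \<theta>"
    using L by (subst ennreal_mult) (auto simp: mult.assoc)
  also have "1 / L * L powr - k = L powr - (k + 1)"
  proof -
    have "L powr (- k) * L powr (- 1) = L powr (- k + - 1)" by (rule powr_add[symmetric])
    moreover have "- k + - 1 = - (k + 1)" by simp
    moreover have "L powr (- 1) = 1 / L" using L by (simp add: powr_minus divide_inverse)
    ultimately show ?thesis by (simp add: mult.commute)
  qed
  finally show ?thesis unfolding L_def .
qed

lemma ratio_bound:
  fixes a a' \<theta> k D :: real
  assumes th: "\<theta> > 0" and k: "k > 0" and a: "a \<ge> 0" and a': "a' \<ge> 0" and D: "D \<ge> 0"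
    and aa: "a' \<le> a + D"
  shows "(1 / \<theta> + a) powr - (k + 1) \<le> exp ((k + 1) * ln (1 + D * \<theta>)) * (1 / \<theta> + a') powr - (k + 1)"
proof -
  define X where "X = 1 / \<theta> + a"
  define Y where "Y = 1 / \<theta> + a'"
  define R where "R = 1 + D * \<theta>"
  define p where "p = k + 1"
  have X: "X > 0" unfolding X_def using th a by (simp add: add_pos_nonneg)
  have Y: "Y > 0" unfolding Y_def using th a' by (simp add: add_pos_nonneg)
  have R: "R \<ge> 1" unfolding R_def using D th by simp
  have p: "p > 0" unfolding p_def using k by simp
  have "Y \<le> R * X"
  proof -
    have "R * X = 1 / \<theta> + a + D + D * \<theta> * a" unfolding R_def X_def using th by (simp add: field_simps)
    moreover have "D * \<theta> * a \<ge> 0" using D th a by simp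
    ultimately show ?thesis unfolding Y_def using aa by simp
  qed
  then have "Y powr p \<le> (R * X) powr p" using Y p by (intro powr_mono2) auto
  also have "\<dots> = R powr p * X powr p" using R X by (simp add: powr_mult)
  finally have YX: "Y powr p \<le> R powr p * X powr p" .
  have eR: "exp (p * ln R) = R powr p" using R by (simp add: powr_def)
  have "X powr - p = 1 / X powr p" by (simp add: powr_minus divide_inverse)
  also have "\<dots> \<le> R powr p / Y powr p"
    using YX X Y R by (simp add: divide_simps mult.commute)
  also have "\<dots> = R powr p * Y powr - p" by (simp add: powr_minus divide_inverse)
  finally show ?thesis unfolding X_def Y_def R_def p_def eR[unfolded R_def p_def] .
qed

lemma B_facts:
  fixes B :: "real measure"
  assumes k: "k > 0" and th: "\<theta> > 0" and B_sets: "sets B = sets borel"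
    and B_gamma: "distr B borel (\<lambda>b. 1 / b) = density lborel (\<lambda>x. ennreal (gamma_density k \<theta> x))"
  shows "prob_space B" and "AE b in B. b > 0"
proof -
  have sp: "space B = UNIV" using sets_eq_imp_space_eq[OF B_sets] by simp
  have inv: "(\<lambda>b. 1 / b) \<in> measurable B borel"
    by (subst measurable_cong_sets[OF B_sets refl]) simp
  have m[measurable]: "gamma_density k \<theta> \<in> borel_measurable borel"
    unfolding gamma_density_def by measurable
  have "emeasure B (space B) = emeasure (distr B borel (\<lambda>b. 1 / b)) UNIV"
    using inv sp by (simp add: emeasure_distr)
  also have "\<dots> = 1" unfolding B_gamma using gamma_total[OF k th]
    by (simp add: emeasure_density)
  finally show "prob_space B" by (rule prob_spaceI)
  have "AE x in distr B borel (\<lambda>b. 1 / b). x > 0"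
    unfolding B_gamma
    by (subst AE_density) (auto simp: gamma_density_def split: if_splits)
  then have "AE b in B. 1 / b > 0"
    by (subst (asm) AE_distr_iff[OF inv]) auto
  then show "AE b in B. b > 0" by eventually_elim simp
qed

lemma inner_B:
  fixes B :: "real measure"
  assumes k: "k > 0" and th: "\<theta> > 0" and B_sets: "sets B = sets borel"
    and B_gamma: "distr B borel (\<lambda>b. 1 / b) = density lborel (\<lambda>x. ennreal (gamma_density k \<theta> x))"
    and a: "a \<ge> 0"
  shows "(\<integral>\<^sup>+ b. ennreal (exp (- a / b) / (2 * b)) \<partial>B) = ennreal ((1 / \<theta> + a) powr - (k + 1)) * Jc k \<theta>"
proof -
  have inv: "(\<lambda>b. 1 / b) \<in> measurable B borel"
    by (subst measurable_cong_sets[OF B_sets refl]) simp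
  have m[measurable]: "gamma_density k \<theta> \<in> borel_measurable borel"
    unfolding gamma_density_def by measurable
  have "(\<integral>\<^sup>+ b. ennreal (exp (- a / b) / (2 * b)) \<partial>B)
      = (\<integral>\<^sup>+ b. ennreal ((1 / b) / 2 * exp (- a * (1 / b))) \<partial>B)"
    using B_facts(2)[OF k th B_sets B_gamma]
    by (intro nn_integral_cong_AE) (auto elim!: eventually_mono simp: field_simps)
  also have "\<dots> = (\<integral>\<^sup>+ t. ennreal (t / 2 * exp (- a * t)) \<partial>distr B borel (\<lambda>b. 1 / b))"
    using inv by (subst nn_integral_distr) auto
  also have "\<dots> = (\<integral>\<^sup>+ t. ennreal (gamma_density k \<theta> t) * ennreal (t / 2 * exp (- a * t)) \<partial>lborel)"
    unfolding B_gamma by (subst nn_integral_density) auto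
  also have "\<dots> = (\<integral>\<^sup>+ t. ennreal (gamma_density k \<theta> t * (t / 2 * exp (- a * t))) \<partial>lborel)"
  proof (intro nn_integral_cong)
    fix t :: real
    have "gamma_density k \<theta> t \<ge> 0" using th Gamma_pos'[OF k] by (simp add: gamma_density_def)
    then show "ennreal (gamma_density k \<theta> t) * ennreal (t / 2 * exp (- a * t)) = ennreal (gamma_density k \<theta> t * (t / 2 * exp (- a * t)))"
      by (subst ennreal_mult') auto
  qed
  also have "\<dots> = ennreal ((1 / \<theta> + a) powr - (k + 1)) * Jc k \<theta>"
    by (rule gamma_moment[OF k th a])
  finally show ?thesis .
qed

lemma bind_formula:
  fixes B :: "real measure"
  assumes k: "k > 0" and th: "\<theta> > 0" and B_sets: "sets B = sets borel"
    and B_gamma: "distr B borel (\<lambda>b. 1 / b) = density lborel (\<lambda>x. ennreal (gamma_density k \<theta> x))"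
    and S[measurable]: "S \<in> sets borel"
  shows "emeasure (B \<bind> (\<lambda>b. distr (laplace_measure b) borel (\<lambda>z. c + z))) S
    = (\<integral>\<^sup>+ y. ennreal ((1 / \<theta> + \<bar>y - c\<bar>) powr - (k + 1)) * Jc k \<theta> * indicator S y \<partial>lborel)"
proof -
  have sp: "space B = UNIV" using sets_eq_imp_space_eq[OF B_sets] by simp
  have P: "prob_space B" by (rule B_facts(1)[OF k th B_sets B_gamma])
  have AEp: "AE b in B. b > 0" by (rule B_facts(2)[OF k th B_sets B_gamma])
  have Km: "(\<lambda>b. distr (laplace_measure b) borel (\<lambda>z. c + z)) \<in> measurable B (subprob_algebra borel)"
    by (subst measurable_cong_sets[OF B_sets refl]) (rule kernel_meas)
  have pair: "pair_sigma_finite B lborel"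
    using P by (intro pair_sigma_finite.intro prob_space_imp_sigma_finite lborel.sigma_finite_measure_axioms)
  have Fm: "(\<lambda>(b, y). ennreal (exp (- \<bar>y - c\<bar> / b) / (2 * b)) * indicator S y) \<in> borel_measurable (B \<Otimes>\<^sub>M lborel)"
    by (subst measurable_cong_sets[OF sets_pair_measure_cong[OF B_sets sets_lborel] refl]) measurable
  have "emeasure (B \<bind> (\<lambda>b. distr (laplace_measure b) borel (\<lambda>z. c + z))) S
     = (\<integral>\<^sup>+ b. emeasure (distr (laplace_measure b) borel (\<lambda>z. c + z)) S \<partial>B)"
    using sp Km S by (subst emeasure_bind) auto
  also have "\<dots> = (\<integral>\<^sup>+ b. (\<integral>\<^sup>+ y. ennreal (exp (- \<bar>y - c\<bar> / b) / (2 * b)) * indicator S y \<partial>lborel) \<partial>B)"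
    using AEp by (intro nn_integral_cong_AE) (auto elim!: eventually_mono simp: emeasure_kernel_pos[OF _ S])
  also have "\<dots> = (\<integral>\<^sup>+ y. (\<integral>\<^sup>+ b. ennreal (exp (- \<bar>y - c\<bar> / b) / (2 * b)) * indicator S y \<partial>B) \<partial>lborel)"
    using pair_sigma_finite.Fubini'[OF pair Fm] by simp
  also have "\<dots> = (\<integral>\<^sup>+ y. ennreal ((1 / \<theta> + \<bar>y - c\<bar>) powr - (k + 1)) * Jc k \<theta> * indicator S y \<partial>lborel)"
  proof (intro nn_integral_cong)
    fix y :: real
    have "(\<integral>\<^sup>+ b. ennreal (exp (- \<bar>y - c\<bar> / b) / (2 * b)) * indicator S y \<partial>B)
       = (\<integral>\<^sup>+ b. ennreal (exp (- \<bar>y - c\<bar> / b) / (2 * b)) \<partial>B) * indicator S y"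
      by (rule nn_integral_multc) (subst measurable_cong_sets[OF B_sets refl], measurable)
    then show "(\<integral>\<^sup>+ b. ennreal (exp (- \<bar>y - c\<bar> / b) / (2 * b)) * indicator S y \<partial>B)
       = ennreal ((1 / \<theta> + \<bar>y - c\<bar>) powr - (k + 1)) * Jc k \<theta> * indicator S y"
      using inner_B[OF k th B_sets B_gamma, of "\<bar>y - c\<bar>"] by simp
  qed
  finally show ?thesis .
qed

theorem theoremB3:
  fixes adj :: "'d \<Rightarrow> 'd \<Rightarrow> bool" and q :: "'d \<Rightarrow> real"
    and \<Delta>q k \<theta> :: real and B :: "real measure"
  assumes sens_bound: "\<forall>d d'. adj d d' \<longrightarrow> \<bar>q d - q d'\<bar> \<le> \<Delta>q"
    and sens_attained: "\<exists>d d'. adj d d' \<and> \<bar>q d - q d'\<bar> = \<Delta>q"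
    and k_pos: "k > 0" and \<theta>_pos: "\<theta> > 0"
    and B_sets: "sets B = sets borel"
    and B_gamma: "distr B borel (\<lambda>b. 1 / b) = density lborel (\<lambda>x. ennreal (gamma_density k \<theta> x))"
  shows "differentially_private adj (r2dp_laplace B q) ((k + 1) * ln (1 + \<Delta>q * \<theta>))"
  unfolding differentially_private_def
proof (intro allI impI)
  fix d d' and S :: "real set" assume adj: "adj d d'" and S: "S \<in> sets borel"
  define \<epsilon> where "\<epsilon> = (k + 1) * ln (1 + \<Delta>q * \<theta>)"
  have D: "\<Delta>q \<ge> 0" using sens_attained by auto
  have dd: "\<bar>q d - q d'\<bar> \<le> \<Delta>q" using sens_bound adj by auto
  have P: "prob_space B" by (rule B_facts(1)[OF k_pos \<theta>_pos B_sets B_gamma])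
  have sub: "subprob_space (r2dp_laplace B q x)" for x
    unfolding r2dp_laplace_def
    by (rule subprob_space_bind[OF prob_space_imp_subprob_space[OF P]])
       (subst measurable_cong_sets[OF B_sets refl], rule kernel_meas)
  have "emeasure (r2dp_laplace B q d) S
     = (\<integral>\<^sup>+ y. ennreal ((1 / \<theta> + \<bar>y - q d\<bar>) powr - (k + 1)) * Jc k \<theta> * indicator S y \<partial>lborel)"
    unfolding r2dp_laplace_def by (rule bind_formula[OF k_pos \<theta>_pos B_sets B_gamma S])
  also have "\<dots> \<le> (\<integral>\<^sup>+ y. ennreal (exp \<epsilon>) * (ennreal ((1 / \<theta> + \<bar>y - q d'\<bar>) powr - (k + 1)) * Jc k \<theta> * indicator S y) \<partial>lborel)"
  proof (intro nn_integral_mono)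
    fix y :: real
    have "\<bar>y - q d'\<bar> \<le> \<bar>y - q d\<bar> + \<Delta>q" using dd by linarith
    then have r: "(1 / \<theta> + \<bar>y - q d\<bar>) powr - (k + 1) \<le> exp \<epsilon> * (1 / \<theta> + \<bar>y - q d'\<bar>) powr - (k + 1)"
      unfolding \<epsilon>_def by (intro ratio_bound) (use \<theta>_pos k_pos D in auto)
    have "ennreal ((1 / \<theta> + \<bar>y - q d\<bar>) powr - (k + 1)) \<le> ennreal (exp \<epsilon>) * ennreal ((1 / \<theta> + \<bar>y - q d'\<bar>) powr - (k + 1))"
      using r by (simp add: ennreal_mult[symmetric])
    then show "ennreal ((1 / \<theta> + \<bar>y - q d\<bar>) powr - (k + 1)) * Jc k \<theta> * indicator S y
      \<le> ennreal (exp \<epsilon>) * (ennreal ((1 / \<theta> + \<bar>y - q d'\<bar>) powr - (k + 1)) * Jc k \<theta> * indicator S y)"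
      by (simp add: mult.assoc[symmetric] mult_right_mono)
  qed
  also have "\<dots> = ennreal (exp \<epsilon>) * emeasure (r2dp_laplace B q d') S"
    unfolding r2dp_laplace_def bind_formula[OF k_pos \<theta>_pos B_sets B_gamma S]
    using S by (subst nn_integral_cmult) auto
  finally have le: "emeasure (r2dp_laplace B q d) S \<le> ennreal (exp \<epsilon>) * emeasure (r2dp_laplace B q d') S" .
  have "ennreal (measure (r2dp_laplace B q d) S) \<le> ennreal (exp \<epsilon> * measure (r2dp_laplace B q d') S)"
  proof -
    interpret s1: subprob_space "r2dp_laplace B q d" by (rule sub)
    interpret s2: subprob_space "r2dp_laplace B q d'" by (rule sub)
    show ?thesis using le by (simp add: s1.emeasure_eq_measure s2.emeasure_eq_measure ennreal_mult)
  qed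
  then show "measure (r2dp_laplace B q d) S \<le> exp \<epsilon> * measure (r2dp_laplace B q d') S"
    by (subst (asm) ennreal_le_iff) auto
qed

end
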